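(* Let $0<\alpha<\beta$ and $0<c<\alpha$ be real constants and define $f(a,b)=\dfrac{a^2+b^2-c^2}{2ab}$ for $a,b\in[\alpha,\beta]$. Then \[\max_{a,b\in[\alpha,\beta]} f(a,b)=\max\left\{\frac{\alpha^2+\beta^2-c^2}{2\alpha\beta},\ 1-\frac{c^2}{2\beta^2}\right\}.\] *)

theory Defs
  imports Complex_Main
begin

definition cosf :: "real \<Rightarrow> real \<Rightarrow> real \<Rightarrow> real" where
  "cosf c a b = (a^2 + b^2 - c^2) / (2 * a * b)"

end

theory Submission
  imports Defs
begin

lemma conv_aux:
  fixes p q x a y :: real
  assumes q: "q > 0" and x: "0 < x" and xa: "x \<le> a" and ay: "a \<le> y"
  shows "p * a + q / a \<le> max (p * x + q / x) (p * y + q / y)"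
proof (rule ccontr)
  assume H: "\<not> ?thesis"
  have a0: "a > 0" using x xa by linarith
  have e1: "p * a + q / a - (p * x + q / x) = (a - x) * (p - q / (a * x))"
    using a0 x by (simp add: field_simps)
  have e2: "p * a + q / a - (p * y + q / y) = (a - y) * (p - q / (a * y))"
    using a0 x ay by (simp add: field_simps)
  have g1: "(a - x) * (p - q / (a * x)) > 0" using H e1 by linarith
  have g2: "(a - y) * (p - q / (a * y)) > 0" using H e2 by linarith
  have ax: "a > x" using g1 xa by (cases "a = x") auto
  have ay': "a < y" using g2 ay by (cases "a = y") auto
  have p1: "p > q / (a * x)" using g1 ax by (simp add: zero_less_mult_iff)
  have p2: "p < q / (a * y)" using g2 ay' by (simp add: zero_less_mult_iff)
  have "q / (a * y) \<le> q / (a * x)"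
    using q a0 x ax ay' by (intro divide_left_mono) (auto intro: mult_left_mono)
  then show False using p1 p2 by linarith
qed

lemma cosf_form:
  assumes "a > 0" "b > 0"
  shows "cosf c a b = (1 / (2*b)) * a + ((b^2 - c^2) / (2*b)) / a"
  using assms by (simp add: cosf_def field_simps power2_eq_square)

lemma cosf_sym: "cosf c a b = cosf c b a"
  by (simp add: cosf_def algebra_simps)

lemma bound1:
  fixes \<alpha> \<beta> c a b :: real
  assumes "0 < \<alpha>" "0 < c" "c < \<alpha>" "\<alpha> \<le> a" "a \<le> \<beta>" "\<alpha> \<le> b"
  shows "cosf c a b \<le> max (cosf c \<alpha> b) (cosf c \<beta> b)"
proof -
  have b0: "b > 0" using assms by linarith
  have "c^2 < b^2" using assms by (intro power_strict_mono) auto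
  then have q: "(b^2 - c^2) / (2*b) > 0" using b0 by simp
  show ?thesis
    using conv_aux[OF q, of \<alpha> a \<beta> "1/(2*b)"] assms b0
    by (simp add: cosf_form)
qed

theorem lemma6p2:
  fixes \<alpha> \<beta> c :: real
  assumes "0 < \<alpha>" and "\<alpha> < \<beta>" and "0 < c" and "c < \<alpha>"
  defines "M \<equiv> max ((\<alpha>^2 + \<beta>^2 - c^2) / (2 * \<alpha> * \<beta>)) (1 - c^2 / (2 * \<beta>^2))"
  shows "(\<exists>a\<in>{\<alpha>..\<beta>}. \<exists>b\<in>{\<alpha>..\<beta>}. cosf c a b = M)
         \<and> (\<forall>a\<in>{\<alpha>..\<beta>}. \<forall>b\<in>{\<alpha>..\<beta>}. cosf c a b \<le> M)"
proof -
  have b0: "\<beta> > 0" using assms by linarith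
  have fab: "cosf c \<alpha> \<beta> = (\<alpha>^2 + \<beta>^2 - c^2) / (2 * \<alpha> * \<beta>)" by (simp add: cosf_def)
  have fbb: "cosf c \<beta> \<beta> = 1 - c^2 / (2 * \<beta>^2)"
    using b0 by (simp add: cosf_def field_simps power2_eq_square)
  have faa: "cosf c \<alpha> \<alpha> = 1 - c^2 / (2 * \<alpha>^2)"
    using assms by (simp add: cosf_def field_simps power2_eq_square)
  have "c^2 / (2 * \<beta>^2) \<le> c^2 / (2 * \<alpha>^2)"
    using assms by (intro divide_left_mono mult_left_mono power_mono) auto
  then have aa_le: "cosf c \<alpha> \<alpha> \<le> M" using faa fbb unfolding M_def by linarith
  have ab_le: "cosf c \<alpha> \<beta> \<le> M" "cosf c \<beta> \<alpha> \<le> M" "cosf c \<beta> \<beta> \<le> M"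
    using fab fbb cosf_sym[of c \<beta> \<alpha>] unfolding M_def by auto
  have ex: "\<exists>a\<in>{\<alpha>..\<beta>}. \<exists>b\<in>{\<alpha>..\<beta>}. cosf c a b = M"
  proof (cases "cosf c \<alpha> \<beta> \<le> cosf c \<beta> \<beta>")
    case True
    then have "cosf c \<beta> \<beta> = M" using fab fbb unfolding M_def by auto
    then show ?thesis using assms by (intro bexI[of _ \<beta>]) auto
  next
    case False
    then have "cosf c \<alpha> \<beta> = M" using fab fbb unfolding M_def by auto
    then show ?thesis using assms by (intro bexI[of _ \<alpha>] bexI[of _ \<beta>]) auto
  qed
  have all: "\<forall>a\<in>{\<alpha>..\<beta>}. \<forall>b\<in>{\<alpha>..\<beta>}. cosf c a b \<le> M"
  proof (intro ballI)
    fix a b assume a: "a \<in> {\<alpha>..\<beta>}" and b: "b \<in> {\<alpha>..\<beta>}"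
    have h1: "cosf c a b \<le> max (cosf c \<alpha> b) (cosf c \<beta> b)"
      using bound1[of \<alpha> c a \<beta> b] assms a b by auto
    have h2: "cosf c \<alpha> b \<le> max (cosf c \<alpha> \<alpha>) (cosf c \<alpha> \<beta>)"
      using bound1[of \<alpha> c b \<beta> \<alpha>] assms a b cosf_sym[of c \<alpha> b] cosf_sym[of c \<alpha> \<alpha>]
        cosf_sym[of c \<alpha> \<beta>] by auto
    have h3: "cosf c \<beta> b \<le> max (cosf c \<beta> \<alpha>) (cosf c \<beta> \<beta>)"
      using bound1[of \<alpha> c b \<beta> \<beta>] assms a b cosf_sym[of c \<beta> b] cosf_sym[of c \<alpha> \<beta>]
        by auto
    show "cosf c a b \<le> M" using h1 h2 h3 aa_le ab_le by linarith
  qed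
  show ?thesis using ex all by blast
qed

end
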